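(* Every locally Menger Hausdorff $P$-space can be densely embedded in a Menger Hausdorff $P$-space.
   Context: A space $X$ is Menger if for each sequence $(\mathcal{U}_n)$ of open covers of $X$ there is a sequence $(\mathcal{V}_n)$ with each $\mathcal{V}_n$ a finite subset of $\mathcal{U}_n$ and $\bigcup_{n}\bigcup\mathcal{V}_n=X$. A space $X$ is locally Menger if for each $x\in X$ there exist an open set $U$ and a Menger subspace $Y$ of $X$ with $x\in U\subseteq Y$. A $P$-space is a space in which every countable intersection of open sets is open. *)

theory Defs
  imports "HOL-Analysis.Analysis"
begin

definition open_cover_of :: "'a topology \<Rightarrow> 'a set set \<Rightarrow> bool" where
  "open_cover_of X \<U> \<longleftrightarrow> (\<forall>U\<in>\<U>. openin X U) \<and> topspace X \<subseteq> \<Union>\<U>"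

definition Menger_space :: "'a topology \<Rightarrow> bool" where
  "Menger_space X \<longleftrightarrow>
     (\<forall>\<U> :: nat \<Rightarrow> 'a set set. (\<forall>n. open_cover_of X (\<U> n)) \<longrightarrow>
        (\<exists>\<V> :: nat \<Rightarrow> 'a set set. (\<forall>n. finite (\<V> n) \<and> \<V> n \<subseteq> \<U> n) \<and>
            (\<Union>n. \<Union>(\<V> n)) = topspace X))"

definition locally_Menger_space :: "'a topology \<Rightarrow> bool" where
  "locally_Menger_space X \<longleftrightarrow>
     (\<forall>x\<in>topspace X. \<exists>U Y. openin X U \<and> Y \<subseteq> topspace X \<and>
        Menger_space (subtopology X Y) \<and> x \<in> U \<and> U \<subseteq> Y)"

definition P_space :: "'a topology \<Rightarrow> bool" where
  "P_space X \<longleftrightarrow>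
     (\<forall>\<F>. countable \<F> \<and> \<F> \<noteq> {} \<and> (\<forall>U\<in>\<F>. openin X U) \<longrightarrow> openin X (\<Inter>\<F>))"

end

theory Submission
  imports Defs
begin

definition lindin :: "'a topology \<Rightarrow> 'a set \<Rightarrow> bool" where
  "lindin X K \<longleftrightarrow> K \<subseteq> topspace X \<and>
     (\<forall>\<U>. (\<forall>U\<in>\<U>. openin X U) \<and> K \<subseteq> \<Union>\<U> \<longrightarrow> (\<exists>\<V>\<subseteq>\<U>. countable \<V> \<and> K \<subseteq> \<Union>\<V>))"

lemma lindin_indexed:
  assumes "lindin X K" "\<And>i. i \<in> I \<Longrightarrow> openin X (A i)" "K \<subseteq> (\<Union>i\<in>I. A i)"
  shows "\<exists>J\<subseteq>I. countable J \<and> K \<subseteq> (\<Union>i\<in>J. A i)"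
proof -
  obtain \<V> where V: "\<V> \<subseteq> A ` I" "countable \<V>" "K \<subseteq> \<Union>\<V>"
    using assms unfolding lindin_def by (metis (no_types, lifting) imageE)
  then obtain J where "countable J" "J \<subseteq> I" "\<V> = A ` J"
    using countable_subset_image by metis
  then show ?thesis using V by blast
qed

lemma lindin_closed_subset:
  assumes "lindin X K" "closedin X C" "C \<subseteq> K"
  shows "lindin X C"
  unfolding lindin_def
proof (intro conjI allI impI)
  show "C \<subseteq> topspace X" using assms closedin_subset by blast
  fix \<U> assume U: "(\<forall>U\<in>\<U>. openin X U) \<and> C \<subseteq> \<Union>\<U>"
  have "\<forall>U\<in>insert (topspace X - C) \<U>. openin X U" using U assms(2) by auto
  moreover have "K \<subseteq> \<Union>(insert (topspace X - C) \<U>)"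
    using U assms(1) unfolding lindin_def by auto
  ultimately obtain \<V> where V: "\<V> \<subseteq> insert (topspace X - C) \<U>" "countable \<V>" "K \<subseteq> \<Union>\<V>"
    using assms(1) unfolding lindin_def by meson
  show "\<exists>\<V>\<subseteq>\<U>. countable \<V> \<and> C \<subseteq> \<Union>\<V>"
    by (rule exI[of _ "\<V> - {topspace X - C}"]) (use V assms(3) in auto)
qed

lemma lindin_countable_Union:
  assumes "countable \<K>" "\<And>K. K \<in> \<K> \<Longrightarrow> lindin X K"
  shows "lindin X (\<Union>\<K>)"
  unfolding lindin_def
proof (intro conjI allI impI)
  show "\<Union>\<K> \<subseteq> topspace X" using assms unfolding lindin_def by blast
  fix \<U> assume U: "(\<forall>U\<in>\<U>. openin X U) \<and> \<Union>\<K> \<subseteq> \<Union>\<U>"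
  have "\<forall>K\<in>\<K>. \<exists>\<V>\<subseteq>\<U>. countable \<V> \<and> K \<subseteq> \<Union>\<V>"
    using U assms(2) unfolding lindin_def by (meson Union_upper subset_trans)
  then obtain f where f: "\<And>K. K\<in>\<K> \<Longrightarrow> f K \<subseteq> \<U> \<and> countable (f K) \<and> K \<subseteq> \<Union>(f K)"
    by metis
  show "\<exists>\<V>\<subseteq>\<U>. countable \<V> \<and> \<Union>\<K> \<subseteq> \<Union>\<V>"
  proof (intro exI conjI)
    show "\<Union>(f ` \<K>) \<subseteq> \<U>" using f by blast
    show "countable (\<Union>(f ` \<K>))" using f assms(1) by (intro countable_UN) auto
    show "\<Union>\<K> \<subseteq> \<Union>(\<Union>(f ` \<K>))"
    proof
      fix x assume "x \<in> \<Union>\<K>"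
      then obtain K where K: "K \<in> \<K>" "x \<in> K" by blast
      have "K \<subseteq> \<Union>(f K)" using f[OF K(1)] by blast
      then obtain V where "V \<in> f K" "x \<in> V" using K(2) by blast
      then show "x \<in> \<Union>(\<Union>(f ` \<K>))" using K(1) by blast
    qed
  qed
qed

lemma lindin_Un:
  assumes "lindin X A" "lindin X B"
  shows "lindin X (A \<union> B)"
  using lindin_countable_Union[of "{A,B}" X] assms by auto

lemma Menger_imp_lindin:
  assumes "Menger_space (subtopology X S)" "S \<subseteq> topspace X"
  shows "lindin X S"
  unfolding lindin_def
proof (intro conjI allI impI)
  show "S \<subseteq> topspace X" by fact
  fix \<U> assume U: "(\<forall>U\<in>\<U>. openin X U) \<and> S \<subseteq> \<Union>\<U>"
  let ?g = "\<lambda>U. U \<inter> S"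
  have "open_cover_of (subtopology X S) (?g ` \<U>)"
    using U assms(2) unfolding open_cover_of_def by (auto simp: openin_subtopology)
  from assms(1)[unfolded Menger_space_def, rule_format, of "\<lambda>n. ?g ` \<U>", OF this]
  obtain \<V> :: "nat \<Rightarrow> _" where VV: "(\<forall>n. finite (\<V> n) \<and> \<V> n \<subseteq> ?g ` \<U>) \<and> (\<Union>n. \<Union>(\<V> n)) = topspace (subtopology X S)"
    by (rule exE)
  have V0: "\<forall>n. finite (\<V> n) \<and> \<V> n \<subseteq> ?g ` \<U>" using VV by (rule conjunct1)
  have V2: "(\<Union>n. \<Union>(\<V> n)) = topspace (subtopology X S)" using VV by (rule conjunct2)
  have V1: "finite (\<V> n) \<and> \<V> n \<subseteq> ?g ` \<U>" for n using V0 by (rule spec)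
  note V = V1 V2
  have "countable (\<Union>n. \<V> n)" using V(1) by (intro countable_UN[of UNIV]) (auto intro: countable_finite)
  moreover have "(\<Union>n. \<V> n) \<subseteq> ?g ` \<U>" using V(1) by blast
  ultimately obtain \<W> where W: "countable \<W>" "\<W> \<subseteq> \<U>" "(\<Union>n. \<V> n) = ?g ` \<W>"
    using countable_subset_image by metis
  have "S = (\<Union>n. \<Union>(\<V> n))" using V(2) assms(2) by (simp add: inf.absorb2)
  moreover have "(\<Union>n. \<Union>(\<V> n)) = \<Union>(\<Union>n. \<V> n)" by blast
  ultimately have "S \<subseteq> \<Union>(\<Union>n. \<V> n)" by simp
  then have "S \<subseteq> \<Union>\<W>" using W(3) by auto
  then show "\<exists>\<V>\<subseteq>\<U>. countable \<V> \<and> S \<subseteq> \<Union>\<V>" using W by blast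
qed

lemma lindin_subtopology:
  assumes "lindin X C"
  shows "lindin (subtopology X C) C"
  unfolding lindin_def
proof (intro conjI allI impI)
  show "C \<subseteq> topspace (subtopology X C)" using assms unfolding lindin_def by auto
  fix \<U> assume U: "(\<forall>U\<in>\<U>. openin (subtopology X C) U) \<and> C \<subseteq> \<Union>\<U>"
  then obtain V where V: "\<And>U. U \<in> \<U> \<Longrightarrow> openin X (V U) \<and> U = V U \<inter> C"
    unfolding openin_subtopology by metis
  have "C \<subseteq> (\<Union>U\<in>\<U>. V U)" using U V by blast
  then obtain J where J: "J \<subseteq> \<U>" "countable J" "C \<subseteq> (\<Union>U\<in>J. V U)"
    using lindin_indexed[OF assms, of \<U> V] V by blast
  have "C \<subseteq> \<Union>J" using J V by blast
  then show "\<exists>\<V>\<subseteq>\<U>. countable \<V> \<and> C \<subseteq> \<Union>\<V>" using J by blast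
qed

lemma P_space_subtopology:
  assumes "P_space X" shows "P_space (subtopology X C)"
  unfolding P_space_def
proof (intro allI impI)
  fix \<F> assume F: "countable \<F> \<and> \<F> \<noteq> {} \<and> (\<forall>U\<in>\<F>. openin (subtopology X C) U)"
  then obtain V where V: "\<And>U. U \<in> \<F> \<Longrightarrow> openin X (V U) \<and> U = V U \<inter> C"
    unfolding openin_subtopology by metis
  have "openin X (\<Inter>(V ` \<F>))" using assms F V unfolding P_space_def by auto
  moreover have "\<Inter>\<F> = \<Inter>(V ` \<F>) \<inter> C" using F V by blast
  ultimately show "openin (subtopology X C) (\<Inter>\<F>)" unfolding openin_subtopology by blast
qed

lemma Hausdorff_P_lindin_closed:
  assumes "Hausdorff_space X" "P_space X" "lindin X S"
  shows "closedin X S"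
proof (cases "S = {}")
  case True then show ?thesis by simp
next
  case False
  have St: "S \<subseteq> topspace X" using assms(3) unfolding lindin_def by blast
  have "openin X (topspace X - S)"
  proof (subst openin_subopen, intro ballI)
    fix y assume y: "y \<in> topspace X - S"
    have "\<exists>U V. openin X U \<and> openin X V \<and> s \<in> U \<and> y \<in> V \<and> disjnt U V" if s: "s \<in> S" for s
    proof -
      have "s \<in> topspace X" "y \<in> topspace X" "s \<noteq> y" using s y St by auto
      then show ?thesis using assms(1)[unfolded Hausdorff_space_def, rule_format, of s y] by blast
    qed
    then obtain U V where UV: "\<And>s. s \<in> S \<Longrightarrow> openin X (U s) \<and> openin X (V s) \<and> s \<in> U s \<and> y \<in> V s \<and> disjnt (U s) (V s)"
      by metis
    obtain J where J: "J \<subseteq> S" "countable J" "S \<subseteq> (\<Union>s\<in>J. U s)"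
      using lindin_indexed[OF assms(3), of S U] UV by blast
    have "J \<noteq> {}" using J False by auto
    then have o: "openin X (\<Inter>(V ` J))" using assms(2) J UV unfolding P_space_def by auto
    have "y \<in> \<Inter>(V ` J)" using J UV by blast
    moreover have "\<Inter>(V ` J) \<subseteq> topspace X - S"
    proof
      fix z assume z: "z \<in> \<Inter>(V ` J)"
      then have "z \<in> topspace X" using o openin_subset by blast
      moreover have "z \<notin> S"
      proof
        assume "z \<in> S"
        then obtain s where s: "s \<in> J" "z \<in> U s" using J by blast
        have "z \<in> V s" using z s by blast
        moreover have "disjnt (U s) (V s)" using UV s J(1) by blast
        ultimately show False using s by (auto simp: disjnt_def)
      qed
      ultimately show "z \<in> topspace X - S" by blast
    qed
    ultimately show "\<exists>T. openin X T \<and> y \<in> T \<and> T \<subseteq> topspace X - S" using o by blast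
  qed
  then show ?thesis unfolding closedin_def using St by (intro conjI)
qed

lemma lindinD:
  assumes "lindin X K" "\<And>U. U \<in> \<U> \<Longrightarrow> openin X U" "K \<subseteq> \<Union>\<U>"
  shows "\<exists>\<V>\<subseteq>\<U>. countable \<V> \<and> K \<subseteq> \<Union>\<V>"
proof -
  have H: "\<forall>\<U>. (\<forall>U\<in>\<U>. openin X U) \<and> K \<subseteq> \<Union>\<U> \<longrightarrow> (\<exists>\<V>\<subseteq>\<U>. countable \<V> \<and> K \<subseteq> \<Union>\<V>)"
    using assms(1) unfolding lindin_def by (rule conjunct2)
  have "(\<forall>U\<in>\<U>. openin X U) \<and> K \<subseteq> \<Union>\<U>" using assms(2,3) by blast
  then show ?thesis using H by blast
qed

lemma P_spaceD:
  assumes "P_space X" "countable \<F>" "\<F> \<noteq> {}" "\<And>U. U \<in> \<F> \<Longrightarrow> openin X U"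
  shows "openin X (\<Inter>\<F>)"
proof -
  have "countable \<F> \<and> \<F> \<noteq> {} \<and> (\<forall>U\<in>\<F>. openin X U)" using assms(2,3,4) by blast
  then show ?thesis using assms(1) unfolding P_space_def by blast
qed

lemma lind_P_Menger:
  assumes "lindin T (topspace T)" "P_space T"
  shows "Menger_space T"
  unfolding Menger_space_def
proof (intro allI impI)
  fix \<U> :: "nat \<Rightarrow> _" assume cov: "\<forall>n. open_cover_of T (\<U> n)"
  show "\<exists>\<V>. (\<forall>n. finite (\<V> n) \<and> \<V> n \<subseteq> \<U> n) \<and> (\<Union>n. \<Union>(\<V> n)) = topspace T"
  proof (cases "topspace T = {}")
    case True
    then show ?thesis by (intro exI[of _ "\<lambda>n. {}"]) auto
  next
    case False
    have "\<exists>C\<subseteq>\<U> n. countable C \<and> topspace T \<subseteq> \<Union>C" for n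
    proof (rule lindinD[OF assms(1)])
      show "\<And>U. U \<in> \<U> n \<Longrightarrow> openin T U" "topspace T \<subseteq> \<Union>(\<U> n)"
        using cov unfolding open_cover_of_def by blast+
    qed
    then obtain C where C: "\<And>n. C n \<subseteq> \<U> n \<and> countable (C n) \<and> topspace T \<subseteq> \<Union>(C n)"
      by metis
    have Cne: "C n \<noteq> {}" for n using C[of n] False by auto
    define u where "u n k = from_nat_into (C n) k" for n k
    have ru: "range (u n) = C n" for n unfolding u_def using Cne C by simp
    have uopen: "openin T (u n k)" for n k
      using ru[of n] C[of n] cov unfolding open_cover_of_def by blast
    define W where "W n k = \<Union>(u n ` {..k})" for n k
    define G where "G f = (\<Inter>n. W n (f n))" for f :: "nat \<Rightarrow> nat"
    have Gopen: "openin T (G f)" for f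
    proof -
      have "openin T (W n (f n))" for n unfolding W_def using uopen by (intro openin_Union) auto
      then show ?thesis unfolding G_def by (intro P_spaceD[OF assms(2)]) auto
    qed
    have Gcov: "topspace T \<subseteq> (\<Union>f\<in>UNIV. G f)"
    proof
      fix x assume x: "x \<in> topspace T"
      have "\<forall>n. \<exists>k. x \<in> u n k" using C ru x by blast
      then obtain fx where "\<And>n. x \<in> u n (fx n)" by metis
      then have "x \<in> W n (fx n)" for n unfolding W_def by (intro UN_I[of "fx n"]) auto
      then have "x \<in> G fx" unfolding G_def by blast
      then show "x \<in> (\<Union>f\<in>UNIV. G f)" by blast
    qed
    obtain J where J: "countable J" "topspace T \<subseteq> (\<Union>f\<in>J. G f)"
      using lindin_indexed[OF assms(1), of UNIV G] Gopen Gcov by blast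
    have Jne: "J \<noteq> {}" using J False by auto
    define fm where "fm m = from_nat_into J m" for m
    define g where "g n = fm n n" for n
    show ?thesis
    proof (intro exI[of _ "\<lambda>n. u n ` {..g n}"] conjI allI)
      fix n
      show "finite (u n ` {..g n})" by simp
      show "u n ` {..g n} \<subseteq> \<U> n" using ru[of n] C[of n] by blast
    next
      show "(\<Union>n. \<Union>(u n ` {..g n})) = topspace T"
      proof
        show "(\<Union>n. \<Union>(u n ` {..g n})) \<subseteq> topspace T" using uopen by (auto dest: openin_subset)
        show "topspace T \<subseteq> (\<Union>n. \<Union>(u n ` {..g n}))"
        proof
          fix x assume "x \<in> topspace T"
          then obtain f where f: "f \<in> J" "x \<in> G f" using J by blast
          then obtain m where m: "fm m = f" unfolding fm_def using from_nat_into_surj J by metis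
          have "x \<in> W m (f m)" using f unfolding G_def by blast
          then have "x \<in> \<Union>(u m ` {..g m})" unfolding W_def g_def m .
          then show "x \<in> (\<Union>n. \<Union>(u n ` {..g n}))" by blast
        qed
      qed
    qed
  qed
qed

definition ptY :: "'a \<Rightarrow> 'a set set" where "ptY x = {{x}}"
definition carY :: "'a topology \<Rightarrow> 'a set set set" where "carY X = insert {} (ptY ` topspace X)"
definition preY :: "'a topology \<Rightarrow> 'a set set set \<Rightarrow> 'a set" where
  "preY X W = {x \<in> topspace X. ptY x \<in> W}"
definition openY :: "'a topology \<Rightarrow> 'a set set set \<Rightarrow> bool" where
  "openY X W \<longleftrightarrow> W \<subseteq> carY X \<and> openin X (preY X W) \<and> ({} \<in> W \<longrightarrow> lindin X (topspace X - preY X W))"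
definition Ytop :: "'a topology \<Rightarrow> 'a set set topology" where
  "Ytop X = topology (openY X)"

lemma ptY_inj[simp]: "ptY x = ptY y \<longleftrightarrow> x = y" by (auto simp: ptY_def)
lemma ptY_ne[simp]: "ptY x \<noteq> {}" "{} \<noteq> ptY x" by (auto simp: ptY_def)

lemma lindin_empty[simp]: "lindin X {}" unfolding lindin_def by blast

lemma istopology_openY: "istopology (openY X)"
  unfolding istopology_def
proof (intro conjI allI impI)
  fix S T assume S: "openY X S" and T: "openY X T"
  have e: "preY X (S \<inter> T) = preY X S \<inter> preY X T" unfolding preY_def by auto
  have e2: "topspace X - preY X (S \<inter> T) = (topspace X - preY X S) \<union> (topspace X - preY X T)"
    unfolding e by blast
  have "S \<inter> T \<subseteq> carY X" using S unfolding openY_def by blast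
  moreover have "openin X (preY X (S \<inter> T))" unfolding e using S T unfolding openY_def by blast
  moreover have "lindin X (topspace X - preY X (S \<inter> T))" if "{} \<in> S \<inter> T"
    unfolding e2 using S T that unfolding openY_def by (intro lindin_Un) auto
  ultimately show "openY X (S \<inter> T)" unfolding openY_def by blast
next
  fix \<K> assume K: "\<forall>K\<in>\<K>. openY X K"
  have e: "preY X (\<Union>\<K>) = \<Union>(preY X ` \<K>)" unfolding preY_def by auto
  have o: "openin X (preY X (\<Union>\<K>))" using K unfolding e openY_def by auto
  have "lindin X (topspace X - preY X (\<Union>\<K>))" if h: "{} \<in> \<Union>\<K>"
  proof -
    obtain K0 where "K0 \<in> \<K>" "{} \<in> K0" using h by blast
    then have L: "lindin X (topspace X - preY X K0)" and sub: "preY X K0 \<subseteq> preY X (\<Union>\<K>)"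
      using K unfolding openY_def preY_def by auto
    have ps: "preY X (\<Union>\<K>) \<subseteq> topspace X" unfolding preY_def by blast
    have "closedin X (topspace X - preY X (\<Union>\<K>))"
      unfolding closedin_def using o ps by (simp add: Diff_Diff_Int Int_absorb1)
    moreover have "topspace X - preY X (\<Union>\<K>) \<subseteq> topspace X - preY X K0" using sub by blast
    ultimately show ?thesis by (rule lindin_closed_subset[OF L])
  qed
  moreover have "\<Union>\<K> \<subseteq> carY X" using K unfolding openY_def by blast
  ultimately show "openY X (\<Union>\<K>)" using o unfolding openY_def by simp
qed

lemma openin_Ytop: "openin (Ytop X) = openY X"
  unfolding Ytop_def by (rule topology_inverse'[OF istopology_openY])

lemma topspace_Ytop: "topspace (Ytop X) = carY X"
proof -
  have p: "preY X (carY X) = topspace X" by (auto simp: preY_def carY_def)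
  have "openY X (carY X)" unfolding openY_def p by auto
  moreover have "\<And>W. openY X W \<Longrightarrow> W \<subseteq> carY X" unfolding openY_def by blast
  ultimately show ?thesis unfolding topspace_def openin_Ytop by blast
qed

lemma preY_image: "preY X (ptY ` U) = U \<inter> topspace X"
  unfolding preY_def by auto

lemma openY_image: "openin X U \<Longrightarrow> openY X (ptY ` U)"
  unfolding openY_def using openin_subset[of X U]
  by (auto simp: preY_image carY_def Int_absorb2)

lemma embedding_ptY: "embedding_map X (Ytop X) ptY"
proof (rule injective_open_imp_embedding_map)
  show "continuous_map X (Ytop X) ptY"
    unfolding continuous_map_def topspace_Ytop openin_Ytop
    by (auto simp: carY_def openY_def preY_def)
  show "open_map X (Ytop X) ptY" unfolding open_map_def openin_Ytop using openY_image by blast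
  show "inj_on ptY (topspace X)" by (simp add: inj_on_def)
qed

lemma Ytop_P: assumes "P_space X" shows "P_space (Ytop X)"
  unfolding P_space_def openin_Ytop
proof (intro allI impI)
  fix \<F> assume F: "countable \<F> \<and> \<F> \<noteq> {} \<and> (\<forall>U\<in>\<F>. openY X U)"
  have e: "preY X (\<Inter>\<F>) = \<Inter>(preY X ` \<F>)" using F unfolding preY_def by auto
  have o: "openin X (preY X (\<Inter>\<F>))" unfolding e using assms F unfolding P_space_def openY_def by auto
  have sub: "\<Inter>\<F> \<subseteq> carY X" using F unfolding openY_def by blast
  have "lindin X (topspace X - preY X (\<Inter>\<F>))" if "{} \<in> \<Inter>\<F>"
  proof -
    have eq: "topspace X - preY X (\<Inter>\<F>) = \<Union>((\<lambda>F. topspace X - preY X F) ` \<F>)"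
      unfolding e using F by auto
    have li: "lindin X (topspace X - preY X F)" if "F \<in> \<F>" for F
      using F that \<open>{} \<in> \<Inter>\<F>\<close> unfolding openY_def by blast
    have "lindin X (\<Union>((\<lambda>F. topspace X - preY X F) ` \<F>))"
      by (rule lindin_countable_Union) (use F li in auto)
    then show ?thesis unfolding eq .
  qed
  then show "openY X (\<Inter>\<F>)" using o sub unfolding openY_def by blast
qed

lemma Ytop_lindin: "lindin (Ytop X) (topspace (Ytop X))"
  unfolding lindin_def topspace_Ytop openin_Ytop
proof (intro conjI allI impI subset_refl)
  fix \<U> assume U: "(\<forall>U\<in>\<U>. openY X U) \<and> carY X \<subseteq> \<Union>\<U>"
  obtain W0 where W0: "W0 \<in> \<U>" "{} \<in> W0" using U unfolding carY_def by blast
  have K: "lindin X (topspace X - preY X W0)" using U W0 unfolding openY_def by blast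
  have cov: "topspace X - preY X W0 \<subseteq> (\<Union>W\<in>\<U>. preY X W)"
  proof
    fix x assume x: "x \<in> topspace X - preY X W0"
    then have "ptY x \<in> carY X" unfolding carY_def by blast
    then obtain W where "W \<in> \<U>" "ptY x \<in> W" using U by blast
    then show "x \<in> (\<Union>W\<in>\<U>. preY X W)" using x unfolding preY_def by blast
  qed
  have opn: "\<And>W. W \<in> \<U> \<Longrightarrow> openin X (preY X W)" using U unfolding openY_def by blast
  obtain J where J: "J \<subseteq> \<U>" "countable J" "topspace X - preY X W0 \<subseteq> (\<Union>W\<in>J. preY X W)"
    using lindin_indexed[OF K opn cov] by blast
  have "carY X \<subseteq> \<Union>(insert W0 J)"
  proof
    fix y assume "y \<in> carY X"
    then consider "y = {}" | x where "x \<in> topspace X" "y = ptY x" unfolding carY_def by blast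
    then show "y \<in> \<Union>(insert W0 J)"
    proof cases
      case 1 then show ?thesis using W0 by blast
    next
      case 2
      show ?thesis
      proof (cases "x \<in> preY X W0")
        case True then show ?thesis using 2 unfolding preY_def by blast
      next
        case False
        then obtain W where "W \<in> J" "x \<in> preY X W" using J 2 by blast
        then show ?thesis using 2 unfolding preY_def by blast
      qed
    qed
  qed
  then show "\<exists>\<V>\<subseteq>\<U>. countable \<V> \<and> carY X \<subseteq> \<Union>\<V>"
    using J W0 by (intro exI[of _ "insert W0 J"]) auto
qed

lemma Ytop_Hausdorff:
  assumes "locally_Menger_space X" "Hausdorff_space X" "P_space X"
  shows "Hausdorff_space (Ytop X)"
proof -
  have inf: "\<exists>U V. openY X U \<and> openY X V \<and> ptY a \<in> U \<and> {} \<in> V \<and> disjnt U V"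
    if a: "a \<in> topspace X" for a
  proof -
    have "\<exists>U Y. openin X U \<and> Y \<subseteq> topspace X \<and> Menger_space (subtopology X Y) \<and> a \<in> U \<and> U \<subseteq> Y"
      using assms(1) a unfolding locally_Menger_space_def by (rule bspec)
    then obtain U0 S where US: "openin X U0" "S \<subseteq> topspace X" "Menger_space (subtopology X S)" "a \<in> U0" "U0 \<subseteq> S"
      by (elim exE conjE)
    have L: "lindin X S" using US(3,2) by (rule Menger_imp_lindin)
    have cS: "closedin X S" using assms(2,3) L by (rule Hausdorff_P_lindin_closed)
    have pre: "preY X (carY X - ptY ` S) = topspace X - S"
      unfolding preY_def carY_def by auto
    have e1: "topspace X - (topspace X - S) = S" using US(2) by blast
    have o1: "openY X (carY X - ptY ` S)" unfolding openY_def pre e1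
    proof (intro conjI impI)
      show "carY X - ptY ` S \<subseteq> carY X" by blast
      show "openin X (topspace X - S)" using cS unfolding closedin_def by (rule conjunct2)
      show "lindin X S" by (rule L)
    qed
    have o2: "openY X (ptY ` U0)" using US(1) by (rule openY_image)
    have d: "disjnt (ptY ` U0) (carY X - ptY ` S)" using US(5) unfolding disjnt_def by blast
    have i1: "ptY a \<in> ptY ` U0" using US(4) by (rule imageI)
    have i2: "{} \<in> carY X - ptY ` S" unfolding carY_def by auto
    show ?thesis using o1 o2 d i1 i2 by (intro exI[of _ "ptY ` U0"] exI[of _ "carY X - ptY ` S"]) simp
  qed
  have fin: "\<exists>U V. openY X U \<and> openY X V \<and> ptY a \<in> U \<and> ptY b \<in> V \<and> disjnt U V"
    if ab: "a \<in> topspace X" "b \<in> topspace X" "a \<noteq> b" for a b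
  proof -
    have "\<exists>U V. openin X U \<and> openin X V \<and> a \<in> U \<and> b \<in> V \<and> disjnt U V"
      using assms(2)[unfolded Hausdorff_space_def, rule_format, of a b] ab by blast
    then obtain U V where UV: "openin X U" "openin X V" "a \<in> U" "b \<in> V" "disjnt U V"
      by (elim exE conjE)
    have "openY X (ptY ` U)" using UV(1) by (rule openY_image)
    moreover have "openY X (ptY ` V)" using UV(2) by (rule openY_image)
    moreover have "disjnt (ptY ` U) (ptY ` V)" using UV(5) by (auto simp: disjnt_def)
    moreover have "ptY a \<in> ptY ` U" using UV(3) by (rule imageI)
    moreover have "ptY b \<in> ptY ` V" using UV(4) by (rule imageI)
    ultimately show ?thesis by (intro exI[of _ "ptY ` U"] exI[of _ "ptY ` V"]) simp
  qed
  show ?thesis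
    unfolding Hausdorff_space_def topspace_Ytop openin_Ytop
  proof (intro allI impI)
    fix x y assume xy: "x \<in> carY X \<and> y \<in> carY X \<and> x \<noteq> y"
    show "\<exists>U V. openY X U \<and> openY X V \<and> x \<in> U \<and> y \<in> V \<and> disjnt U V"
    proof (cases "x = {}")
      case True
      then have "y \<noteq> {}" using xy by blast
      then obtain b where b: "b \<in> topspace X" "y = ptY b" using xy unfolding carY_def by blast
      obtain U V where UV: "openY X U" "openY X V" "ptY b \<in> U" "{} \<in> V" "disjnt U V"
        using inf[OF b(1)] by (elim exE conjE)
      have "disjnt V U" using UV(5) by (rule disjnt_sym)
      then show ?thesis using UV True b(2) by (intro exI[of _ V] exI[of _ U]) simp
    next
      case False
      then obtain a where a: "a \<in> topspace X" "x = ptY a" using xy unfolding carY_def by blast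
      show ?thesis
      proof (cases "y = {}")
        case True
        obtain U V where UV: "openY X U" "openY X V" "ptY a \<in> U" "{} \<in> V" "disjnt U V"
          using inf[OF a(1)] by (elim exE conjE)
        then show ?thesis using True a(2) by (intro exI[of _ U] exI[of _ V]) simp
      next
        case False
        then obtain b where b: "b \<in> topspace X" "y = ptY b" using xy unfolding carY_def by blast
        have "a \<noteq> b" using xy a(2) b(2) by blast
        obtain U V where UV: "openY X U" "openY X V" "ptY a \<in> U" "ptY b \<in> V" "disjnt U V"
          using fin[OF a(1) b(1) \<open>a \<noteq> b\<close>] by (elim exE conjE)
        then show ?thesis using a(2) b(2) by (intro exI[of _ U] exI[of _ V]) simp
      qed
    qed
  qed
qed

theorem theorem3p8:
  fixes X :: "'a topology"
  assumes "locally_Menger_space X" and "Hausdorff_space X" and "P_space X"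
  shows "\<exists>(Y :: 'a set set topology) (e :: 'a \<Rightarrow> 'a set set).
           Menger_space Y \<and> Hausdorff_space Y \<and> P_space Y \<and>
           embedding_map X Y e \<and> Y closure_of (e ` topspace X) = topspace Y"
proof -
  define C where "C = Ytop X closure_of (ptY ` topspace X)"
  define Y0 where "Y0 = subtopology (Ytop X) C"
  have Csub: "C \<subseteq> topspace (Ytop X)" unfolding C_def by (rule closure_of_subset_topspace)
  have tY0: "topspace Y0 = C" unfolding Y0_def using Csub by (rule topspace_subtopology_subset)
  have imsub: "ptY ` topspace X \<subseteq> topspace (Ytop X)" unfolding topspace_Ytop carY_def by blast
  have imC: "ptY ` topspace X \<subseteq> C" unfolding C_def using imsub by (rule closure_of_subset)
  have P0: "P_space Y0" unfolding Y0_def using Ytop_P[OF assms(3)] P_space_subtopology by blast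
  have "lindin (Ytop X) C"
  proof (rule lindin_closed_subset[OF Ytop_lindin])
    show "closedin (Ytop X) C" unfolding C_def by (rule closedin_closure_of)
    show "C \<subseteq> topspace (Ytop X)" by (rule Csub)
  qed
  then have "lindin Y0 C" unfolding Y0_def by (rule lindin_subtopology)
  then have "lindin Y0 (topspace Y0)" unfolding tY0 .
  then have M: "Menger_space Y0" using P0 lind_P_Menger by blast
  have H: "Hausdorff_space Y0" unfolding Y0_def using Ytop_Hausdorff[OF assms] Hausdorff_space_subtopology by blast
  have E: "embedding_map X Y0 ptY" unfolding Y0_def embedding_map_in_subtopology
    using embedding_ptY imC by blast
  have D: "Y0 closure_of (ptY ` topspace X) = topspace Y0"
  proof -
    have "C \<inter> ptY ` topspace X = ptY ` topspace X" using imC by blast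
    then have "Y0 closure_of (ptY ` topspace X) = C \<inter> C"
      unfolding Y0_def closure_of_subtopology by (simp add: C_def)
    then show ?thesis using tY0 by simp
  qed
  show ?thesis using M H P0 E D by blast
qed

end
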